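(* Let $Q$ be an open bounded subset of $\mathbb{R}^N$ for some $N\ge1$ and $p\in[1,\infty)$. Let $(z_k)_{k\ge1}$ be a sequence of non-negative functions in $L_p(Q)$ and assume that there is a sequence $(Z_j)_{j\ge1}$ in $L_p(Q)$ such that $$\lim_{k\to\infty}\Big\|\Big(z_k-\frac1j\Big)_+-Z_j\Big\|_{L_p(Q)}=0\quad\text{for all }j\ge1.$$ Then $(z_k)$ converges in $L_p(Q)$ as $k\to\infty$.
   Context: $z_+:=\max\{z,0\}$. *)

theory Defs
  imports "HOL-Analysis.Analysis"
begin

text \<open>L_p(Q) (real-valued, Lebesgue measure restricted to Q), represented by functions.\<close>
definition Lp_space :: "real \<Rightarrow> 'a::euclidean_space set \<Rightarrow> ('a \<Rightarrow> real) set" where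
  "Lp_space p Q = {f. f \<in> borel_measurable (lebesgue_on Q) \<and>
                      integrable (lebesgue_on Q) (\<lambda>x. \<bar>f x\<bar> powr p)}"

definition Lp_norm :: "real \<Rightarrow> 'a::euclidean_space set \<Rightarrow> ('a \<Rightarrow> real) \<Rightarrow> real" where
  "Lp_norm p Q f = (\<integral>x. \<bar>f x\<bar> powr p \<partial>(lebesgue_on Q)) powr (1 / p)"

definition pos_part :: "real \<Rightarrow> real" where
  "pos_part z = max z 0"

end

theory Submission imports Defs begin

lemma pw_ineq:
  fixes a b :: real assumes "1 \<le> p"
  shows "\<bar>a+b\<bar> powr p \<le> 2 powr p * (\<bar>a\<bar> powr p + \<bar>b\<bar> powr p)"
proof -
  have "\<bar>a+b\<bar> \<le> 2 * max \<bar>a\<bar> \<bar>b\<bar>" by auto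
  hence "\<bar>a+b\<bar> powr p \<le> (2 * max \<bar>a\<bar> \<bar>b\<bar>) powr p"
    using assms by (intro powr_mono2) auto
  also have "\<dots> = 2 powr p * (max \<bar>a\<bar> \<bar>b\<bar>) powr p"
    by (simp add: powr_mult)
  also have "(max \<bar>a\<bar> \<bar>b\<bar>) powr p \<le> \<bar>a\<bar> powr p + \<bar>b\<bar> powr p"
    by (cases "\<bar>a\<bar> \<le> \<bar>b\<bar>") (auto simp: max_def)
  hence "2 powr p * (max \<bar>a\<bar> \<bar>b\<bar>) powr p \<le> 2 powr p * (\<bar>a\<bar> powr p + \<bar>b\<bar> powr p)"
    by (intro mult_left_mono) auto
  finally show ?thesis .
qed

lemma Lp_bound:
  assumes fm: "finite_measure (lebesgue_on Q)" and p: "1 \<le> p"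
    and f: "f \<in> Lp_space p Q" and g: "g \<in> Lp_space p Q"
    and h: "h \<in> borel_measurable (lebesgue_on Q)"
    and le: "AE x in lebesgue_on Q. \<bar>h x\<bar> \<le> \<bar>f x\<bar> + \<bar>g x\<bar>"
  shows "h \<in> Lp_space p Q"
    and "(\<integral>x. \<bar>h x\<bar> powr p \<partial>lebesgue_on Q) \<le>
         2 powr p * ((\<integral>x. \<bar>f x\<bar> powr p \<partial>lebesgue_on Q) + (\<integral>x. \<bar>g x\<bar> powr p \<partial>lebesgue_on Q))"
proof -
  let ?M = "lebesgue_on Q"
  have fi: "integrable ?M (\<lambda>x. \<bar>f x\<bar> powr p)" and gi: "integrable ?M (\<lambda>x. \<bar>g x\<bar> powr p)"
    using f g by (auto simp: Lp_space_def)
  have bi: "integrable ?M (\<lambda>x. 2 powr p * (\<bar>f x\<bar> powr p + \<bar>g x\<bar> powr p))"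
    using fi gi by auto
  have hm: "(\<lambda>x. \<bar>h x\<bar> powr p) \<in> borel_measurable ?M" using h by measurable
  have pt: "AE x in ?M. \<bar>h x\<bar> powr p \<le> 2 powr p * (\<bar>f x\<bar> powr p + \<bar>g x\<bar> powr p)"
    using le
  proof eventually_elim
    case (elim x)
    have "\<bar>h x\<bar> powr p \<le> (\<bar>f x\<bar> + \<bar>g x\<bar>) powr p" using elim p by (intro powr_mono2) auto
    also have "\<dots> \<le> 2 powr p * (\<bar>\<bar>f x\<bar>\<bar> powr p + \<bar>\<bar>g x\<bar>\<bar> powr p)"
      using pw_ineq[OF p, of "\<bar>f x\<bar>" "\<bar>g x\<bar>"] by simp
    finally show ?case by simp
  qed
  have hi: "integrable ?M (\<lambda>x. \<bar>h x\<bar> powr p)"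
    by (rule Bochner_Integration.integrable_bound[OF bi hm]) (use pt in \<open>auto elim!: eventually_mono\<close>)
  show "h \<in> Lp_space p Q" using h hi by (simp add: Lp_space_def)
  have "(\<integral>x. \<bar>h x\<bar> powr p \<partial>?M) \<le> (\<integral>x. 2 powr p * (\<bar>f x\<bar> powr p + \<bar>g x\<bar> powr p) \<partial>?M)"
    by (rule integral_mono_AE[OF hi bi pt])
  also have "\<dots> = 2 powr p * ((\<integral>x. \<bar>f x\<bar> powr p \<partial>?M) + (\<integral>x. \<bar>g x\<bar> powr p \<partial>?M))"
    using fi gi by (simp add: integral_add)
  finally show "(\<integral>x. \<bar>h x\<bar> powr p \<partial>?M) \<le> 2 powr p * ((\<integral>x. \<bar>f x\<bar> powr p \<partial>?M) + (\<integral>x. \<bar>g x\<bar> powr p \<partial>?M))" .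
qed

lemma Lp_const:
  assumes fm: "finite_measure (lebesgue_on Q)"
  shows "(\<lambda>x. c) \<in> Lp_space p Q"
    and "(\<integral>x. \<bar>c\<bar> powr p \<partial>lebesgue_on Q) = measure (lebesgue_on Q) (space (lebesgue_on Q)) * \<bar>c\<bar> powr p"
  using finite_measure.integrable_const[OF fm] by (auto simp: Lp_space_def)

lemma Lp_diff:
  assumes fm: "finite_measure (lebesgue_on Q)" and p: "1 \<le> p"
    and f: "f \<in> Lp_space p Q" and g: "g \<in> Lp_space p Q"
  shows "(\<lambda>x. f x - g x) \<in> Lp_space p Q"
proof -
  have [measurable]: "f \<in> borel_measurable (lebesgue_on Q)" "g \<in> borel_measurable (lebesgue_on Q)"
    using f g by (auto simp: Lp_space_def)
  show ?thesis by (rule Lp_bound(1)[OF fm p f g]) auto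
qed

lemma Lp_pos:
  assumes fm: "finite_measure (lebesgue_on Q)" and p: "1 \<le> p"
    and f: "f \<in> Lp_space p Q"
  shows "(\<lambda>x. pos_part (f x)) \<in> Lp_space p Q"
proof -
  have [measurable]: "f \<in> borel_measurable (lebesgue_on Q)"
    using f by (auto simp: Lp_space_def)
  show ?thesis by (rule Lp_bound(1)[OF fm p f Lp_const(1)[OF fm, of 0]]) (auto simp: pos_part_def)
qed

lemma Lp_zero:
  assumes f: "f \<in> Lp_space p Q" and p: "1 \<le> p"
    and z: "(\<integral>x. \<bar>f x\<bar> powr p \<partial>lebesgue_on Q) = 0"
  shows "AE x in lebesgue_on Q. f x = 0"
proof -
  have "integrable (lebesgue_on Q) (\<lambda>x. \<bar>f x\<bar> powr p)" using f by (auto simp: Lp_space_def)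
  then have "AE x in lebesgue_on Q. \<bar>f x\<bar> powr p = 0"
    using integral_nonneg_eq_0_iff_AE[of "lebesgue_on Q" "\<lambda>x. \<bar>f x\<bar> powr p"] z by auto
  then show ?thesis by (auto elim!: eventually_mono)
qed

lemma cauchy_aux:
  fixes a :: "nat \<Rightarrow> real"
  assumes H: "\<forall>i\<ge>1. \<forall>j\<ge>1. \<bar>a i - a j\<bar> \<le> \<bar>1 / real i - 1 / real j\<bar>"
  shows "\<forall>j\<ge>1. \<bar>a j - lim (\<lambda>n. a (Suc n))\<bar> \<le> 1 / real j"
proof -
  have C: "Cauchy (\<lambda>n. a (Suc n))"
  proof (rule metric_CauchyI)
    fix e :: real assume "0 < e"
    then obtain N where N: "inverse (real (Suc N)) < e" using reals_Archimedean by blast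
    show "\<exists>M. \<forall>m\<ge>M. \<forall>n\<ge>M. dist (a (Suc m)) (a (Suc n)) < e"
    proof (intro exI allI impI)
      fix m n assume mn: "N \<le> m" "N \<le> n"
      have "dist (a (Suc m)) (a (Suc n)) \<le> \<bar>1 / real (Suc m) - 1 / real (Suc n)\<bar>"
        using H[rule_format, of "Suc m" "Suc n"] by (simp add: dist_real_def)
      also have "\<dots> \<le> 1 / real (Suc N)"
      proof -
        have "1 / real (Suc m) \<le> 1 / real (Suc N)" "1 / real (Suc n) \<le> 1 / real (Suc N)"
          using mn by (auto simp: divide_simps)
        moreover have "0 \<le> 1 / real (Suc m)" "0 \<le> 1 / real (Suc n)" by auto
        ultimately show ?thesis by linarith
      qed
      also have "\<dots> < e" using N by (simp add: inverse_eq_divide)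
      finally show "dist (a (Suc m)) (a (Suc n)) < e" .
    qed
  qed
  hence L: "(\<lambda>n. a (Suc n)) \<longlonglongrightarrow> lim (\<lambda>n. a (Suc n))"
    using Cauchy_convergent convergent_LIMSEQ_iff by blast
  show ?thesis
  proof (intro allI impI)
    fix j :: nat assume j: "j \<ge> 1"
    have t1: "(\<lambda>n. \<bar>a j - a (Suc n)\<bar>) \<longlonglongrightarrow> \<bar>a j - lim (\<lambda>n. a (Suc n))\<bar>"
      by (intro tendsto_intros L)
    have t2: "(\<lambda>n. \<bar>1 / real j - inverse (real (Suc n))\<bar>) \<longlonglongrightarrow> \<bar>1 / real j - 0\<bar>"
      by (intro tendsto_intros LIMSEQ_inverse_real_of_nat)
    have "\<bar>a j - lim (\<lambda>n. a (Suc n))\<bar> \<le> \<bar>1 / real j - 0\<bar>"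
      proof -
      have "\<bar>a j - a (Suc n)\<bar> \<le> \<bar>1 / real j - inverse (real (Suc n))\<bar>" for n
          using H[rule_format, of j "Suc n"] j by (simp add: inverse_eq_divide)
      then show ?thesis by (intro tendsto_le[OF trivial_limit_sequentially t2 t1] always_eventually) auto
      qed
    then show "\<bar>a j - lim (\<lambda>n. a (Suc n))\<bar> \<le> 1 / real j" by simp
  qed
qed

theorem lemma3p5:
  fixes Q :: "'a::euclidean_space set" and p :: real
    and z :: "nat \<Rightarrow> 'a \<Rightarrow> real" and Z :: "nat \<Rightarrow> 'a \<Rightarrow> real"
  assumes "open Q" and "bounded Q" and "1 \<le> p"
    and "\<forall>k. z k \<in> Lp_space p Q"
    and "\<forall>k. AE x in lebesgue_on Q. z k x \<ge> 0"
    and "\<forall>j\<ge>1. Z j \<in> Lp_space p Q"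
    and "\<forall>j\<ge>1. (\<lambda>k. Lp_norm p Q (\<lambda>x. pos_part (z k x - 1 / real j) - Z j x)) \<longlonglongrightarrow> 0"
  shows "\<exists>w \<in> Lp_space p Q. (\<lambda>k. Lp_norm p Q (\<lambda>x. z k x - w x)) \<longlonglongrightarrow> 0"
proof -
  let ?M = "lebesgue_on Q"
  define I where "I f = (\<integral>x. \<bar>f x\<bar> powr p \<partial>?M)" for f :: "'a \<Rightarrow> real"
  define m where "m = measure ?M (space ?M)"
  have p: "1 \<le> p" by fact
  have fm: "finite_measure ?M"
    by (simp add: assms(1,2) finite_measure_lebesgue_on lmeasurable_open)
  have zL: "z k \<in> Lp_space p Q" for k using assms(4) by auto
  have ZL: "j \<ge> 1 \<Longrightarrow> Z j \<in> Lp_space p Q" for j using assms(6) by auto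
  have Inn: "I f \<ge> 0" for f unfolding I_def by (intro integral_nonneg_AE) auto
  have Icon: "I (\<lambda>x. c) = m * \<bar>c\<bar> powr p" for c
    unfolding I_def m_def using Lp_const(2)[OF fm] by simp
  have m0: "m \<ge> 0" unfolding m_def by simp
  define y where "y k j x = pos_part (z k x - 1 / real j)" for k j x
  have yL: "(y k j) \<in> Lp_space p Q" for k j
    unfolding y_def[abs_def]
    by (intro Lp_pos[OF fm p] Lp_diff[OF fm p] zL Lp_const(1)[OF fm])
  define A where "A j k = I (\<lambda>x. y k j x - Z j x)" for j k
  have A_lim: "(\<lambda>k. A j k) \<longlonglongrightarrow> 0" if j: "j \<ge> 1" for j
  proof -
    have L: "(\<lambda>k. Lp_norm p Q (\<lambda>x. y k j x - Z j x)) \<longlonglongrightarrow> 0"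
      using assms(7) j unfolding y_def by auto
    have "(\<lambda>k. (Lp_norm p Q (\<lambda>x. y k j x - Z j x)) powr p) \<longlonglongrightarrow> 0"
      by (rule tendsto_zero_powrI[OF L tendsto_const]) (use p in \<open>auto simp: Lp_norm_def\<close>)
    moreover have "(Lp_norm p Q (\<lambda>x. y k j x - Z j x)) powr p = A j k" for k
      using Inn[of "\<lambda>x. y k j x - Z j x"] p
      by (simp add: Lp_norm_def A_def I_def[symmetric] powr_powr)
    ultimately show ?thesis by simp
  qed
  have step1: "AE x in ?M. \<bar>Z i x - Z j x\<bar> \<le> \<bar>1 / real i - 1 / real j\<bar>"
    if i: "i \<ge> 1" and j: "j \<ge> 1" for i j
  proof -
    define c where "c = \<bar>1 / real i - 1 / real j\<bar>"
    define h where "h x = pos_part (\<bar>Z i x - Z j x\<bar> - c)" for x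
    have dL: "(\<lambda>x. Z i x - Z j x) \<in> Lp_space p Q" by (intro Lp_diff[OF fm p] ZL i j)
    have aL: "(\<lambda>x. \<bar>Z i x - Z j x\<bar>) \<in> Lp_space p Q"
      using dL by (simp add: Lp_space_def borel_measurable_abs)
    have hL: "h \<in> Lp_space p Q" unfolding h_def[abs_def]
      by (intro Lp_pos[OF fm p] Lp_diff[OF fm p] aL Lp_const(1)[OF fm])
    have hm: "h \<in> borel_measurable ?M" using hL by (simp add: Lp_space_def)
    have bound: "I h \<le> 2 powr p * (A i k + A j k)" for k
    proof -
      have f1: "(\<lambda>x. Z i x - y k i x) \<in> Lp_space p Q" by (intro Lp_diff[OF fm p] ZL i yL)
      have f2: "(\<lambda>x. y k j x - Z j x) \<in> Lp_space p Q" by (intro Lp_diff[OF fm p] ZL j yL)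
      have pt: "\<bar>h x\<bar> \<le> \<bar>Z i x - y k i x\<bar> + \<bar>y k j x - Z j x\<bar>" for x
      proof -
        have "\<bar>y k i x - y k j x\<bar> \<le> c"
          unfolding y_def pos_part_def c_def by (auto simp: max_def)
        then show ?thesis unfolding h_def pos_part_def by (auto simp: max_def)
      qed
      have "I h \<le> 2 powr p * (I (\<lambda>x. Z i x - y k i x) + I (\<lambda>x. y k j x - Z j x))"
        unfolding I_def by (rule Lp_bound(2)[OF fm p f1 f2 hm]) (use pt in auto)
      also have "I (\<lambda>x. Z i x - y k i x) = A i k"
        unfolding A_def I_def by (simp add: abs_minus_commute)
      finally show ?thesis by (simp add: A_def)
    qed
    have "(\<lambda>k. 2 powr p * (A i k + A j k)) \<longlonglongrightarrow> 2 powr p * (0 + 0)"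
      by (intro tendsto_intros A_lim i j)
    hence lim: "(\<lambda>k. 2 powr p * (A i k + A j k)) \<longlonglongrightarrow> 0" by simp
    have "I h \<le> 0"
      by (rule tendsto_le[OF trivial_limit_sequentially lim tendsto_const], rule always_eventually) (use bound in auto)
    hence "I h = 0" using Inn[of h] by linarith
    hence "AE x in ?M. h x = 0" using Lp_zero[OF hL p] unfolding I_def by simp
    then show ?thesis unfolding h_def pos_part_def c_def by (auto elim!: eventually_mono simp: max_def split: if_splits)
  qed
  have step2: "AE x in ?M. \<forall>i\<ge>1. \<forall>j\<ge>1. \<bar>Z i x - Z j x\<bar> \<le> \<bar>1 / real i - 1 / real j\<bar>"
    using step1 by (simp add: AE_all_countable)
  define w where "w x = lim (\<lambda>n. Z (Suc n) x)" for x
  have wclose: "AE x in ?M. \<forall>j\<ge>1. \<bar>Z j x - w x\<bar> \<le> 1 / real j"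
    using step2
  proof eventually_elim
    case (elim x)
    show ?case using cauchy_aux[of "\<lambda>i. Z i x", OF elim] unfolding w_def by blast
  qed
  have [measurable]: "Z (Suc n) \<in> borel_measurable ?M" for n
    using ZL[of "Suc n"] by (simp add: Lp_space_def)
  have wm: "w \<in> borel_measurable ?M" unfolding w_def[abs_def] by measurable
  have Z1: "Z 1 \<in> Lp_space p Q" using ZL by simp
  have wL: "w \<in> Lp_space p Q"
    by (rule Lp_bound(1)[OF fm p Z1 Lp_const(1)[OF fm, of 1] wm])
       (use wclose in \<open>auto elim!: eventually_mono\<close>)
  have step3: "I (\<lambda>x. z k x - w x) \<le> 2 powr p * (A j k + m * \<bar>2 / real j\<bar> powr p)"
    if j: "j \<ge> 1" for j k
  proof -
    have f1: "(\<lambda>x. y k j x - Z j x) \<in> Lp_space p Q" by (intro Lp_diff[OF fm p] ZL j yL)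
    have hm: "(\<lambda>x. z k x - w x) \<in> borel_measurable ?M"
      using Lp_diff[OF fm p zL wL, of k] by (simp add: Lp_space_def)
    have pt: "AE x in ?M. \<bar>z k x - w x\<bar> \<le> \<bar>y k j x - Z j x\<bar> + \<bar>2 / real j\<bar>"
      using wclose assms(5)[rule_format, of k]
    proof eventually_elim
      case (elim x)
      have a: "\<bar>Z j x - w x\<bar> \<le> 1 / real j" using elim j by auto
      have b: "\<bar>z k x - y k j x\<bar> \<le> 1 / real j"
        using elim j unfolding y_def pos_part_def by (auto simp: max_def)
      show ?case using a b by auto
    qed
    have "I (\<lambda>x. z k x - w x) \<le> 2 powr p * (I (\<lambda>x. y k j x - Z j x) + I (\<lambda>x. 2 / real j))"
      unfolding I_def by (rule Lp_bound(2)[OF fm p f1 Lp_const(1)[OF fm] hm pt])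
    then show ?thesis by (simp add: A_def Icon)
  qed
  have B_lim: "(\<lambda>k. I (\<lambda>x. z k x - w x)) \<longlonglongrightarrow> 0"
  proof (rule LIMSEQ_I)
    fix r :: real assume r: "0 < r"
    have "(\<lambda>j. 2 / real j) \<longlonglongrightarrow> 2 * 0"
      unfolding divide_inverse by (intro tendsto_intros lim_inverse_n)
    hence "(\<lambda>j. \<bar>2 / real j\<bar>) \<longlonglongrightarrow> 0" using tendsto_rabs_zero by fastforce
    hence "(\<lambda>j. \<bar>2 / real j\<bar> powr p) \<longlonglongrightarrow> 0"
      by (rule tendsto_zero_powrI[OF _ tendsto_const]) (use p in auto)
    hence "(\<lambda>j. 2 powr p * (m * \<bar>2 / real j\<bar> powr p)) \<longlonglongrightarrow> 2 powr p * (m * 0)"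
      by (intro tendsto_intros)
    hence lim2: "(\<lambda>j. 2 powr p * (m * \<bar>2 / real j\<bar> powr p)) \<longlonglongrightarrow> 0" by simp
    have "eventually (\<lambda>j. 2 powr p * (m * \<bar>2 / real j\<bar> powr p) < r / 2) sequentially"
      by (rule order_tendstoD(2)[OF lim2]) (use r in simp)
    moreover have "eventually (\<lambda>j. j \<ge> (1::nat)) sequentially" by (rule eventually_ge_at_top)
    ultimately obtain j where j: "j \<ge> 1" and jr: "2 powr p * (m * \<bar>2 / real j\<bar> powr p) < r / 2"
      using eventually_happens'[OF sequentially_bot] eventually_conj by (metis (mono_tags, lifting))
    have "(\<lambda>k. 2 powr p * A j k) \<longlonglongrightarrow> 2 powr p * 0" by (intro tendsto_intros A_lim j)
    hence lim3: "(\<lambda>k. 2 powr p * A j k) \<longlonglongrightarrow> 0" by simp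
    have "eventually (\<lambda>k. 2 powr p * A j k < r / 2) sequentially"
      by (rule order_tendstoD(2)[OF lim3]) (use r in simp)
    then obtain K where K: "\<forall>k\<ge>K. 2 powr p * A j k < r / 2" by (auto simp: eventually_sequentially)
    show "\<exists>no. \<forall>n\<ge>no. norm (I (\<lambda>x. z n x - w x) - 0) < r"
    proof (intro exI allI impI)
      fix k assume "K \<le> k"
      hence "2 powr p * A j k < r / 2" using K by auto
      moreover have "I (\<lambda>x. z k x - w x) \<le> 2 powr p * A j k + 2 powr p * (m * \<bar>2 / real j\<bar> powr p)"
        using step3[OF j, of k] by (simp add: distrib_left)
      moreover have "I (\<lambda>x. z k x - w x) \<ge> 0" by (rule Inn)
      ultimately show "norm (I (\<lambda>x. z k x - w x) - 0) < r" using jr by simp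
    qed
  qed
  have "(\<lambda>k. Lp_norm p Q (\<lambda>x. z k x - w x)) \<longlonglongrightarrow> 0"
    unfolding Lp_norm_def I_def[symmetric]
    by (rule tendsto_zero_powrI[OF B_lim tendsto_const]) (use p Inn in auto)
  then show ?thesis using wL by blast
qed

end
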